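(* Let $z:(0,\infty)\to[0,\infty)$ be nonincreasing and lower semi-continuous, set $c(\phi)=z(\phi)\phi$ for $\phi>0$, $c(0)=0$, and assume $\int_0^1\sqrt{c(\phi)}\,d\phi<\infty$. Let $\tau^z(w)=\inf\{F^c[\psi]\mid\psi:\mathbb{R}\to[0,\infty),\ \int_{\mathbb{R}}\psi\,dy=w\}$ and suppose that for some $W>0$ we have $\tau^z(w)=(\tau^z)'(0)\,w$ for all $w\in[0,W]$, where $(\tau^z)'(0)$ is the right derivative at $0$. Then for every $w\in(0,W)$ there is no $\psi:\mathbb{R}\to[0,\infty)$ with $\int_{\mathbb{R}}\psi\,dy=w$ and $F^c[\psi]=\tau^z(w)$.
   Context: For $c:[0,\infty)\to[0,\infty)$ and $\psi:\mathbb{R}\to\mathbb{R}$ (with locally integrable weak derivative; otherwise the energy is $+\infty$), $F^c[\psi]=\int_{\mathbb{R}}\frac12|\psi'(y)|^2+c(|\psi(y)|)\,dy$. *)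

theory Defs
  imports "HOL-Analysis.Analysis"
begin

definition lsc_on :: "real set \<Rightarrow> (real \<Rightarrow> real) \<Rightarrow> bool" where
  "lsc_on S f \<longleftrightarrow> (\<forall>x\<in>S. \<forall>t. t < f x \<longrightarrow> (\<forall>\<^sub>F y in at x within S. t < f y))"

definition test_function :: "(real \<Rightarrow> real) \<Rightarrow> bool" where
  "test_function \<phi> \<longleftrightarrow>
     (\<forall>k::nat. \<forall>x. ((deriv ^^ k) \<phi>) differentiable (at x)) \<and>
     (\<exists>R. \<forall>x. R < \<bar>x\<bar> \<longrightarrow> \<phi> x = 0)"

definition locally_integrable :: "(real \<Rightarrow> real) \<Rightarrow> bool" where
  "locally_integrable f \<longleftrightarrow> (\<forall>a b. set_integrable lborel {a..b} f)"

definition weak_deriv :: "(real \<Rightarrow> real) \<Rightarrow> (real \<Rightarrow> real) \<Rightarrow> bool" where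
  "weak_deriv \<psi> g \<longleftrightarrow> locally_integrable \<psi> \<and> locally_integrable g \<and>
     (\<forall>\<phi>. test_function \<phi> \<longrightarrow>
        (\<integral>y. \<psi> y * deriv \<phi> y \<partial>lborel) = - (\<integral>y. g y * \<phi> y \<partial>lborel))"

text \<open>The energy F^c[psi]; it is +infinity (Inf of the empty set) if psi has no
  locally integrable weak derivative. The integrand does not depend on the choice
  of the weak derivative up to null sets.\<close>
definition energy :: "(real \<Rightarrow> real) \<Rightarrow> (real \<Rightarrow> real) \<Rightarrow> ennreal" where
  "energy c \<psi> = (INF g\<in>{g. weak_deriv \<psi> g}.
      \<integral>\<^sup>+ y. ennreal ((g y)\<^sup>2 / 2 + c \<bar>\<psi> y\<bar>) \<partial>lborel)"

definition tau :: "(real \<Rightarrow> real) \<Rightarrow> real \<Rightarrow> ennreal" where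
  "tau c w = (INF \<psi>\<in>{\<psi>. (\<forall>y. 0 \<le> \<psi> y) \<and> integrable lborel \<psi> \<and> (\<integral>y. \<psi> y \<partial>lborel) = w}.
      energy c \<psi>)"

definition c_of :: "(real \<Rightarrow> real) \<Rightarrow> real \<Rightarrow> real" where
  "c_of z \<phi> = (if \<phi> > 0 then z \<phi> * \<phi> else 0)"

end

theory Submission
  imports Defs "HOL-Computational_Algebra.Polynomial"
begin

coinductive smooth :: "(real \<Rightarrow> real) \<Rightarrow> bool" where
  smoothI: "(\<And>x. f differentiable (at x)) \<Longrightarrow> smooth (deriv f) \<Longrightarrow> smooth f"

lemma smooth_iff: "smooth f \<longleftrightarrow> (\<forall>k x. ((deriv ^^ k) f) differentiable (at x))"
proof
  assume "smooth f"
  have "smooth ((deriv ^^ k) f)" for k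
    by (induction k) (use \<open>smooth f\<close> in \<open>auto elim: smooth.cases\<close>)
  then show "\<forall>k x. ((deriv ^^ k) f) differentiable (at x)"
    by (auto elim: smooth.cases)
next
  assume "\<forall>k x. ((deriv ^^ k) f) differentiable (at x)"
  then show "smooth f"
  proof (coinduction arbitrary: f)
    case (smooth f)
    have "\<forall>k x. ((deriv ^^ k) (deriv f)) differentiable (at x)"
      using smooth by (metis funpow_Suc_right o_apply)
    moreover have "\<And>x. f differentiable (at x)" using smooth[rule_format, of 0] by simp
    ultimately show ?case by blast
  qed
qed

lemma smooth_differentiable: "smooth f \<Longrightarrow> f differentiable (at x)"
  by (auto elim: smooth.cases)

lemma smooth_deriv: "smooth f \<Longrightarrow> smooth (deriv f)"
  by (auto elim: smooth.cases)

lemma smooth_const: "smooth (\<lambda>x. k)"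
proof (coinduction arbitrary: k)
  case (smooth k)
  have "deriv (\<lambda>x. k) = (\<lambda>x. 0)" by (rule ext) (simp add: DERIV_imp_deriv)
  then show ?case by auto
qed

lemma smooth_affine: assumes "smooth g" shows "smooth (\<lambda>x. g (a * x + b))"
proof -
  have "smooth (\<lambda>x. c * g (a * x + b))" if "smooth g" for c g
    using that
  proof (coinduction arbitrary: c g)
    case (smooth c g)
    have dg: "\<And>x. g differentiable (at x)" and sg: "smooth (deriv g)" using smooth by (auto elim: smooth.cases)
    have D: "((\<lambda>x. c * g (a * x + b)) has_real_derivative c * a * deriv g (a * x + b)) (at x)" for x
    proof -
      have "(g has_real_derivative deriv g (a * x + b)) (at (a*x+b))"
        using dg DERIV_deriv_iff_real_differentiable by blast
      then have "((\<lambda>x. g (a * x + b)) has_real_derivative deriv g (a * x + b) * a) (at x)"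
        by (rule DERIV_chain2) (auto intro!: derivative_eq_intros)
      then show ?thesis by (auto intro!: derivative_eq_intros simp: algebra_simps)
    qed
    have "deriv (\<lambda>x. c * g (a * x + b)) = (\<lambda>x. (c * a) * deriv g (a * x + b))"
      using D by (intro ext DERIV_imp_deriv) simp
    then show ?case using D sg real_differentiable_def by metis
  qed
  from this[of g 1] assms show ?thesis by simp
qed

definition sop :: "((real \<Rightarrow> real) \<times> (real \<Rightarrow> real)) list \<Rightarrow> real \<Rightarrow> real" where
  "sop ps = (\<lambda>x. sum_list (map (\<lambda>(p,q). p x * q x) ps))"

definition dl :: "((real \<Rightarrow> real) \<times> (real \<Rightarrow> real)) list \<Rightarrow> ((real \<Rightarrow> real) \<times> (real \<Rightarrow> real)) list" where
  "dl ps = concat (map (\<lambda>(p,q). [(deriv p, q), (p, deriv q)]) ps)"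

lemma sop_deriv:
  assumes "\<forall>(p,q)\<in>set ps. (\<forall>x. p differentiable (at x)) \<and> (\<forall>x. q differentiable (at x))"
  shows "(sop ps has_real_derivative sop (dl ps) x) (at x)"
  using assms
proof (induction ps)
  case Nil
  then show ?case by (simp add: sop_def dl_def)
next
  case (Cons pq ps)
  obtain p q where pq: "pq = (p,q)" by fastforce
  have dp: "(p has_real_derivative deriv p x) (at x)" and dq: "(q has_real_derivative deriv q x) (at x)"
    using Cons.prems pq DERIV_deriv_iff_real_differentiable by auto
  have IH: "(sop ps has_real_derivative sop (dl ps) x) (at x)" using Cons by auto
  have e1: "sop (pq # ps) = (\<lambda>x. p x * q x + sop ps x)" by (simp add: sop_def pq)
  have e2: "sop (dl (pq # ps)) x = deriv p x * q x + p x * deriv q x + sop (dl ps) x"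
    by (simp add: sop_def dl_def pq)
  show ?case unfolding e1 e2
    using DERIV_add[OF DERIV_mult[OF dp dq] IH] by (simp add: algebra_simps)
qed

lemma smooth_sop:
  assumes "\<forall>(p,q)\<in>set ps. smooth p \<and> smooth q"
  shows "smooth (sop ps)"
  using assms
proof (coinduction arbitrary: ps)
  case (smooth ps)
  have diff: "\<forall>(p,q)\<in>set ps. (\<forall>x. p differentiable (at x)) \<and> (\<forall>x. q differentiable (at x))"
    using smooth by (auto intro: smooth_differentiable)
  have D: "\<And>x. (sop ps has_real_derivative sop (dl ps) x) (at x)" by (rule sop_deriv[OF diff])
  have "deriv (sop ps) = sop (dl ps)" using D by (intro ext DERIV_imp_deriv)
  moreover have "\<forall>(p,q)\<in>set (dl ps). smooth p \<and> smooth q"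
    using smooth by (auto simp: dl_def elim: smooth.cases)
  ultimately show ?case using D real_differentiable_def by metis
qed

lemma smooth_mult: "smooth f \<Longrightarrow> smooth g \<Longrightarrow> smooth (\<lambda>x. f x * g x)"
  using smooth_sop[of "[(f,g)]"] by (simp add: sop_def)

lemma smooth_add: "smooth f \<Longrightarrow> smooth g \<Longrightarrow> smooth (\<lambda>x. f x + g x)"
  using smooth_sop[of "[(f,\<lambda>_. 1),(g,\<lambda>_. 1)]"] smooth_const by (simp add: sop_def)

lemma smooth_diff: "smooth f \<Longrightarrow> smooth g \<Longrightarrow> smooth (\<lambda>x. f x - g x)"
  using smooth_sop[of "[(f,\<lambda>_. 1),(g,\<lambda>_. -1)]"] smooth_const by (simp add: sop_def)


definition G :: "real poly \<Rightarrow> real \<Rightarrow> real" where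
  "G p = (\<lambda>t. if t > 0 then poly p (1/t) * exp (-1/t) else 0)"

definition Gd :: "real poly \<Rightarrow> real poly" where
  "Gd p = [:0,0,1:] * (p - pderiv p)"

lemma poly_exp_lim: "((\<lambda>x. poly p x * x / exp x) \<longlongrightarrow> (0::real)) at_top"
proof -
  have e: "poly p x * x / exp x = (\<Sum>i\<le>degree p. coeff p i * (x ^ Suc i / exp x))" for x
    unfolding poly_altdef by (simp add: sum_distrib_left sum_distrib_right sum_divide_distrib mult_ac)
  have "((\<lambda>x. (\<Sum>i\<le>degree p. coeff p i * (x ^ Suc i / exp x))) \<longlongrightarrow> (\<Sum>i\<le>degree p. coeff p i * 0)) at_top"
    by (intro tendsto_sum tendsto_mult tendsto_const tendsto_power_div_exp_0)
  then show ?thesis unfolding e by simp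
qed

lemma G_deriv: "(G p has_real_derivative G (Gd p) t) (at t)"
proof -
  consider "t > 0" | "t < 0" | "t = 0" by linarith
  then show ?thesis
  proof cases
    case 1
    have "((\<lambda>t. poly p (1/t) * exp (-1/t)) has_real_derivative
        poly (pderiv p) (1/t) * (- 1 / t^2) * exp (-1/t) + poly p (1/t) * (exp (-1/t) * (1/t^2))) (at t)"
      using 1
      by (auto intro!: derivative_eq_intros DERIV_chain2[OF poly_DERIV] simp: power2_eq_square field_simps)
    moreover have "poly (pderiv p) (1/t) * (- 1 / t^2) * exp (-1/t) + poly p (1/t) * (exp (-1/t) * (1/t^2))
       = G (Gd p) t"
      using 1 by (simp add: G_def Gd_def algebra_simps power2_eq_square)
    ultimately have "((\<lambda>t. poly p (1/t) * exp (-1/t)) has_real_derivative G (Gd p) t) (at t)" by simp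
    then show ?thesis
      by (rule has_field_derivative_transform_within_open[where S="{0<..}"]) (use 1 in \<open>auto simp: G_def\<close>)
  next
    case 2
    have "((\<lambda>t. 0) has_real_derivative G (Gd p) t) (at t)" using 2 by (simp add: G_def)
    then show ?thesis
      by (rule has_field_derivative_transform_within_open[where S="{..<0}"]) (use 2 in \<open>auto simp: G_def\<close>)
  next
    case 3
    have L: "((\<lambda>h. G p h / h) \<longlongrightarrow> 0) (at_left 0)"
    proof (rule tendsto_eventually)
      show "\<forall>\<^sub>F h in at_left 0. G p h / h = 0"
        using eventually_at_left_real[of "-1::real" 0, simplified] by eventually_elim (auto simp: G_def)
    qed
    have "((\<lambda>x. G p (inverse x) / inverse x) \<longlongrightarrow> 0) at_top"
    proof (rule Lim_transform_eventually[OF poly_exp_lim])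
      show "\<forall>\<^sub>F x in at_top. poly p x * x / exp x = G p (inverse x) / inverse x"
        using eventually_gt_at_top[of 0]
        by eventually_elim (simp add: G_def exp_minus field_simps)
    qed
    then have R: "((\<lambda>h. G p h / h) \<longlongrightarrow> 0) (at_right 0)"
      unfolding at_right_to_top filterlim_filtermap by simp
    have "((\<lambda>h. G p h / h) \<longlongrightarrow> 0) (at 0)"
      using L R filterlim_at_split by blast
    moreover have "G p 0 = 0" "G (Gd p) 0 = 0" by (simp_all add: G_def)
    ultimately have "((\<lambda>h. (G p (0 + h) - G p 0) / h) \<longlongrightarrow> G (Gd p) 0) (at 0)"
      by simp
    then show ?thesis using 3 unfolding DERIV_def by simp
  qed
qed

lemma smooth_G: "smooth (G p)"
proof (coinduction arbitrary: p)
  case (smooth p)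
  have "deriv (G p) = G (Gd p)" using G_deriv by (intro ext DERIV_imp_deriv)
  then show ?case using G_deriv real_differentiable_def by metis
qed

definition fb :: "real \<Rightarrow> real" where "fb t = (if t > 0 then exp (-1/t) else 0)"

lemma smooth_fb: "smooth fb"
proof -
  have "fb = G 1" by (auto simp: fb_def G_def)
  then show ?thesis using smooth_G by metis
qed


definition eta :: "real \<Rightarrow> real" where "eta t = fb t * fb (1 - t)"

lemma smooth_eta: "smooth eta"
proof -
  have "smooth (\<lambda>x. fb ((-1) * x + 1))" by (rule smooth_affine[OF smooth_fb])
  then have "smooth (\<lambda>x. fb (1 - x))" by simp
  then show ?thesis unfolding eta_def[abs_def] by (intro smooth_mult smooth_fb)
qed

lemma fb_nonneg: "0 \<le> fb t" by (simp add: fb_def)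
lemma fb_le1: "fb t \<le> 1" by (simp add: fb_def)

lemma eta_nonneg: "0 \<le> eta t" by (simp add: eta_def fb_def)
lemma eta_le1: "eta t \<le> 1"
  unfolding eta_def using mult_mono[OF fb_le1 fb_le1 _ fb_nonneg, of t "1-t"] by simp
lemma eta_zero: "t \<le> 0 \<or> 1 \<le> t \<Longrightarrow> eta t = 0" by (auto simp: eta_def fb_def)
lemma eta_lower: assumes "1/4 \<le> t" "t \<le> 3/4" shows "exp (-8) \<le> eta t"
proof -
  have "exp (-4) \<le> fb t" using assms by (simp add: fb_def field_simps)
  moreover have "exp (-4) \<le> fb (1 - t)" using assms by (simp add: fb_def field_simps)
  ultimately have "exp (-4) * exp (-4) \<le> fb t * fb (1 - t)"
    by (intro mult_mono fb_nonneg) auto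
  then show ?thesis by (simp add: eta_def flip: exp_add)
qed

lemma eta_isCont: "isCont eta x"
  using smooth_differentiable[OF smooth_eta] differentiable_imp_continuous_within by blast

lemma eta_cont: "continuous_on A eta"
  using eta_isCont by (intro continuous_at_imp_continuous_on) auto

definition S :: "real \<Rightarrow> real" where "S t = integral {-1..t} eta"

lemma S_zero: "t \<le> 0 \<Longrightarrow> S t = 0"
proof -
  assume "t \<le> 0"
  then have "integral {-1..t} eta = integral {-1..t} (\<lambda>_. 0::real)"
    by (intro Henstock_Kurzweil_Integration.integral_cong eta_zero) auto
  then show ?thesis by (simp add: S_def)
qed

lemma S_one: "1 \<le> t \<Longrightarrow> S t = S 1"
proof -
  assume t: "1 \<le> t"
  have "integral {-1..1} eta + integral {1..t} eta = integral {-1..t} eta"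
    using t by (intro Henstock_Kurzweil_Integration.integral_combine integrable_continuous_interval eta_cont) auto
  moreover have "integral {1..t} eta = integral {1..t} (\<lambda>_. 0::real)"
    by (intro Henstock_Kurzweil_Integration.integral_cong eta_zero) auto
  ultimately show ?thesis by (simp add: S_def)
qed

lemma S_deriv: "(S has_real_derivative eta t) (at t)"
proof (cases "t > -1")
  case True
  have "(S has_real_derivative eta t) (at t within {-1..t+1})"
    unfolding S_def[abs_def] using True
    by (intro integral_has_real_derivative eta_cont) auto
  then show ?thesis using True by (simp add: at_within_Icc_at)
next
  case False
  have "((\<lambda>_. 0) has_real_derivative eta t) (at t)" using False eta_zero by simp
  then show ?thesis
    by (rule has_field_derivative_transform_within_open[where S="{..<0}"]) (use False S_zero in auto)
qed

lemma smooth_S: "smooth S"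
proof (rule smoothI)
  show "S differentiable (at x)" for x using S_deriv real_differentiable_def by blast
  have "deriv S = eta" using S_deriv by (intro ext DERIV_imp_deriv)
  then show "smooth (deriv S)" using smooth_eta by simp
qed


definition phi :: "real \<Rightarrow> real \<Rightarrow> real \<Rightarrow> real" where
  "phi a b y = S (y - a) - S (y - b)"

lemma S_shift_deriv: "((\<lambda>x. S (x - a)) has_real_derivative eta (y - a)) (at y)"
proof -
  have "((\<lambda>x. x - a) has_real_derivative 1) (at y)" by (auto intro!: derivative_eq_intros)
  from DERIV_chain2[OF S_deriv this] show ?thesis by simp
qed

lemma phi_deriv: "deriv (phi a b) y = eta (y - a) - eta (y - b)"
proof -
  have "(phi a b has_real_derivative eta (y - a) - eta (y - b)) (at y)"
    unfolding phi_def[abs_def] by (intro DERIV_diff S_shift_deriv)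
  then show ?thesis by (rule DERIV_imp_deriv)
qed

lemma smooth_phi: "smooth (phi a b)"
proof -
  have 1: "smooth (\<lambda>y. S (1 * y + (-a)))" and 2: "smooth (\<lambda>y. S (1 * y + (-b)))"
    by (rule smooth_affine[OF smooth_S])+
  have "smooth (\<lambda>y. S (1 * y + (-a)) - S (1 * y + (-b)))" by (rule smooth_diff[OF 1 2])
  moreover have "(\<lambda>y. S (1 * y + (-a)) - S (1 * y + (-b))) = phi a b"
    by (rule ext) (simp add: phi_def)
  ultimately show ?thesis by simp
qed

lemma phi_supp: "\<bar>a\<bar> + \<bar>b\<bar> + 1 < \<bar>x\<bar> \<Longrightarrow> phi a b x = 0"
proof -
  assume A: "\<bar>a\<bar> + \<bar>b\<bar> + 1 < \<bar>x\<bar>"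
  have h: "a \<le> \<bar>a\<bar>" "-a \<le> \<bar>a\<bar>" "b \<le> \<bar>b\<bar>" "-b \<le> \<bar>b\<bar>" by auto
  have "(x - a \<le> 0 \<and> x - b \<le> 0) \<or> (1 \<le> x - a \<and> 1 \<le> x - b)"
  proof (cases "x \<ge> 0")
    case True then have "\<bar>x\<bar> = x" by simp
    with h A show ?thesis by linarith
  next
    case False then have "\<bar>x\<bar> = -x" by simp
    with h A show ?thesis by linarith
  qed
  then show "phi a b x = 0"
  proof
    assume "x - a \<le> 0 \<and> x - b \<le> 0"
    then show ?thesis unfolding phi_def using S_zero by simp
  next
    assume "1 \<le> x - a \<and> 1 \<le> x - b"
    then have "S (x - a) = S 1" "S (x - b) = S 1" using S_one by blast+
    then show ?thesis unfolding phi_def by simp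
  qed
qed

lemma test_phi: "test_function (phi a b)"
  unfolding test_function_def
proof
  show "\<forall>k x. (deriv ^^ k) (phi a b) differentiable at x" using smooth_phi unfolding smooth_iff .
  show "\<exists>R. \<forall>x. R < \<bar>x\<bar> \<longrightarrow> phi a b x = 0"
    using phi_supp by blast
qed


lemma locint_meas:
  assumes "locally_integrable f"
  shows "f \<in> borel_measurable borel"
proof -
  let ?u = "\<lambda>(i::nat) x. indicator {- real i..real i} x *\<^sub>R f x"
  have m: "?u i \<in> borel_measurable lborel" for i
    using assms unfolding locally_integrable_def set_integrable_def by blast
  have "(\<lambda>i. ?u i x) \<longlonglongrightarrow> f x" for x
  proof (rule tendsto_eventually)
    show "\<forall>\<^sub>F i in sequentially. ?u i x = f x"
      using eventually_ge_at_top[of "nat \<lceil>\<bar>x\<bar>\<rceil>"]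
    proof eventually_elim
      case (elim i)
      then have "\<bar>x\<bar> \<le> real i" by linarith
      then show ?case by (auto simp: indicator_def abs_le_iff)
    qed
  qed
  then have "f \<in> borel_measurable lborel"
    by (intro borel_measurable_LIMSEQ_real[OF _ m]) auto
  then show ?thesis by simp
qed

lemma c_meas:
  assumes "antimono_on {0<..} z"
  shows "c_of z \<in> borel_measurable borel"
proof -
  have "mono_on {0<..} (\<lambda>x. - z x)"
    using assms unfolding monotone_on_def by auto
  then have "(\<lambda>x. - z x) \<in> borel_measurable (restrict_space borel {0<..})"
    by (rule borel_measurable_mono_on_fnc)
  then have "(\<lambda>x. - (- z x)) \<in> borel_measurable (restrict_space borel {0<..})"
    by measurable
  then have zm: "z \<in> borel_measurable (restrict_space borel {0<..})" by simp
  have "(\<lambda>x. z x * x) \<in> borel_measurable (restrict_space borel {0<..})"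
  proof (rule borel_measurable_times[OF zm])
    show "(\<lambda>x. x) \<in> borel_measurable (restrict_space borel {0<..})"
      by (rule measurable_restrict_space1) simp
  qed
  then have "(\<lambda>x. if 0 < x then z x * x else 0) \<in> borel_measurable borel"
    by (subst measurable_If_restrict_space_iff) (auto simp: greaterThan_def)
  then show ?thesis unfolding c_of_def[abs_def] .
qed

lemma test_scale:
  assumes "test_function \<phi>" "L \<noteq> 0"
  shows "test_function (\<lambda>u. \<phi> (L * u))"
proof -
  have "smooth \<phi>" using assms(1) unfolding test_function_def smooth_iff by blast
  then have "smooth (\<lambda>u. \<phi> (L * u + 0))" by (rule smooth_affine)
  then have 1: "\<forall>k x. (deriv ^^ k) (\<lambda>u. \<phi> (L * u)) differentiable at x" unfolding smooth_iff by simp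
  obtain R where R: "\<forall>x. R < \<bar>x\<bar> \<longrightarrow> \<phi> x = 0" using assms(1) unfolding test_function_def by blast
  have "\<forall>u. \<bar>R\<bar> / \<bar>L\<bar> < \<bar>u\<bar> \<longrightarrow> \<phi> (L * u) = 0"
  proof (intro allI impI)
    fix u assume "\<bar>R\<bar> / \<bar>L\<bar> < \<bar>u\<bar>"
    then have "\<bar>R\<bar> < \<bar>L * u\<bar>" using assms(2) by (simp add: field_simps abs_mult)
    then show "\<phi> (L * u) = 0" using R by auto
  qed
  with 1 show ?thesis unfolding test_function_def by blast
qed

lemma deriv_scale:
  assumes "test_function \<phi>"
  shows "deriv (\<lambda>u. \<phi> (L * u)) u = L * deriv \<phi> (L * u)"
proof -
  have "\<phi> differentiable at (L * u)"
    using assms unfolding test_function_def by (metis funpow_0)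
  then have d: "(\<phi> has_real_derivative deriv \<phi> (L * u)) (at (L * u))"
    using DERIV_deriv_iff_real_differentiable by blast
  have "((\<lambda>u. L * u) has_real_derivative L) (at u)" by (auto intro!: derivative_eq_intros)
  from DERIV_chain2[OF d this] show ?thesis by (intro DERIV_imp_deriv) (simp add: mult.commute)
qed

lemma locint_scale:
  assumes "locally_integrable f" "L > 0"
  shows "locally_integrable (\<lambda>y. f (y / L))"
  unfolding locally_integrable_def set_integrable_def
proof (intro allI)
  fix a b
  have "integrable lborel (\<lambda>u. indicator {a/L..b/L} u *\<^sub>R f u)"
    using assms(1) unfolding locally_integrable_def set_integrable_def by blast
  from lborel_integrable_real_affine[OF this, of "1/L" 0]
  have "integrable lborel (\<lambda>x. indicator {a/L..b/L} (x/L) *\<^sub>R f (x / L))" using assms(2) by simp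
  moreover have "indicator {a/L..b/L} (x/L) = (indicator {a..b} x :: real)" for x
    using assms(2) by (simp add: indicator_def divide_le_cancel)
  ultimately show "integrable lborel (\<lambda>x. indicator {a..b} x *\<^sub>R f (x / L))" by simp
qed

lemma locint_cmult: "locally_integrable f \<Longrightarrow> locally_integrable (\<lambda>y. f y / c)"
  unfolding locally_integrable_def set_integrable_def
proof (intro allI)
  fix a b assume "\<forall>a b. integrable lborel (\<lambda>x. indicator {a..b} x *\<^sub>R f x)"
  then have "integrable lborel (\<lambda>x. inverse c * (indicator {a..b} x *\<^sub>R f x))"
    by (intro integrable_mult_right) blast
  then show "integrable lborel (\<lambda>x. indicator {a..b} x *\<^sub>R (f x / c))"
    by (simp add: divide_inverse mult_ac)
qed


lemma weak_deriv_scale: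
  assumes wd: "weak_deriv \<psi> g" and L: "L > 0"
  shows "weak_deriv (\<lambda>y. \<psi> (y / L)) (\<lambda>y. g (y / L) / L)"
  unfolding weak_deriv_def
proof (intro conjI allI impI)
  show "locally_integrable (\<lambda>y. \<psi> (y / L))"
    using wd L locint_scale unfolding weak_deriv_def by blast
  show "locally_integrable (\<lambda>y. g (y / L) / L)"
    using wd L locint_scale locint_cmult unfolding weak_deriv_def by blast
  fix \<phi> assume tf: "test_function \<phi>"
  let ?\<chi> = "\<lambda>u. \<phi> (L * u)"
  have tc: "test_function ?\<chi>" using test_scale[OF tf] L by simp
  have dc: "deriv ?\<chi> x = L * deriv \<phi> (L * x)" for x by (rule deriv_scale[OF tf])
  have wdc: "(\<integral>y. \<psi> y * deriv ?\<chi> y \<partial>lborel) = - (\<integral>y. g y * ?\<chi> y \<partial>lborel)"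
    using wd tc unfolding weak_deriv_def by blast
  have Lne: "L \<noteq> 0" using L by simp
  have absL: "\<bar>L\<bar> = L" using L by simp
  have e1: "(\<lambda>x. \<psi> ((0 + L * x) / L) * deriv \<phi> (0 + L * x)) = (\<lambda>x. \<psi> x * deriv \<phi> (L * x))"
    by (rule ext) (simp add: Lne)
  have e2: "(\<lambda>x. \<psi> x * deriv ?\<chi> x) = (\<lambda>x. L * (\<psi> x * deriv \<phi> (L * x)))"
    by (rule ext) (simp only: dc mult.left_commute)
  have e3: "(\<lambda>x. g ((0 + L * x) / L) / L * \<phi> (0 + L * x)) = (\<lambda>x. inverse L * (g x * ?\<chi> x))"
    by (rule ext) (simp add: Lne divide_inverse mult_ac)
  have "(\<integral>y. \<psi> (y / L) * deriv \<phi> y \<partial>lborel) = \<bar>L\<bar> *\<^sub>R (\<integral>x. \<psi> ((0 + L * x) / L) * deriv \<phi> (0 + L * x) \<partial>lborel)"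
    using Lne by (rule lborel_integral_real_affine)
  also have "\<dots> = L * (\<integral>x. \<psi> x * deriv \<phi> (L * x) \<partial>lborel)"
    by (simp only: e1 absL real_scaleR_def)
  also have "\<dots> = (\<integral>x. \<psi> x * deriv ?\<chi> x \<partial>lborel)"
    by (simp only: e2 integral_mult_right_zero)
  also have "\<dots> = - (\<integral>y. g y * ?\<chi> y \<partial>lborel)" by (rule wdc)
  also have "(\<integral>y. g y * ?\<chi> y \<partial>lborel) = (\<integral>y. g (y / L) / L * \<phi> y \<partial>lborel)"
  proof -
    have "(\<integral>y. g (y / L) / L * \<phi> y \<partial>lborel) = \<bar>L\<bar> *\<^sub>R (\<integral>x. g ((0 + L * x) / L) / L * \<phi> (0 + L * x) \<partial>lborel)"
      using Lne by (rule lborel_integral_real_affine)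
    also have "\<dots> = L * (inverse L * (\<integral>x. g x * ?\<chi> x \<partial>lborel))"
      by (simp only: e3 absL real_scaleR_def integral_mult_right_zero)
    also have "\<dots> = (\<integral>y. g y * ?\<chi> y \<partial>lborel)"
      using Lne by simp
    finally show ?thesis by simp
  qed
  finally show "(\<integral>y. \<psi> (y / L) * deriv \<phi> y \<partial>lborel) = - (\<integral>y. g (y / L) / L * \<phi> y \<partial>lborel)" .
qed


lemma eta_meas[measurable]: "eta \<in> borel_measurable borel"
  by (intro borel_measurable_continuous_onI eta_cont)

lemma eta_int_pos: "0 < (\<integral>\<^sup>+ x. ennreal (eta x) \<partial>lborel)"
proof -
  have "(\<integral>\<^sup>+ x. ennreal (exp (-8)) * indicator {1/4..3/4::real} x \<partial>lborel) \<le> (\<integral>\<^sup>+ x. ennreal (eta x) \<partial>lborel)"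
    by (intro nn_integral_mono) (auto simp: indicator_def intro!: ennreal_leI eta_lower)
  moreover have "(\<integral>\<^sup>+ x. ennreal (exp (-8)) * indicator {1/4..3/4::real} x \<partial>lborel) = ennreal (exp (-8)) * ennreal (1/2)"
    by (subst nn_integral_cmult_indicator) auto
  moreover have "0 < ennreal (exp (-8)) * ennreal (1/2)"
    by (simp only: ennreal_zero_less_mult_iff ennreal_less_zero_iff) simp
  ultimately show ?thesis by order
qed

lemma eta_int_fin: "(\<integral>\<^sup>+ x. ennreal (eta x) \<partial>lborel) < \<infinity>"
proof -
  have "(\<integral>\<^sup>+ x. ennreal (eta x) \<partial>lborel) \<le> (\<integral>\<^sup>+ x. 1 * indicator {0..1::real} x \<partial>lborel)"
  proof (intro nn_integral_mono)
    fix x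
    show "ennreal (eta x) \<le> 1 * indicator {0..1::real} x"
    proof (cases "x \<in> {0..1}")
      case True then show ?thesis using eta_le1[of x] by simp
    next
      case False then have "eta x = 0" using eta_zero by auto
      then show ?thesis by simp
    qed
  qed
  also have "\<dots> = 1" by (subst nn_integral_cmult_indicator) auto
  finally show ?thesis by (simp add: le_less_trans)
qed

lemma psi_eta_int:
  assumes "integrable lborel \<psi>"
  shows "integrable lborel (\<lambda>y. \<psi> y * eta (y - a))"
proof (rule Bochner_Integration.integrable_bound[OF assms])
  have [measurable]: "\<psi> \<in> borel_measurable borel" using borel_measurable_integrable[OF assms] by simp
  show "(\<lambda>y. \<psi> y * eta (y - a)) \<in> borel_measurable lborel" by measurable
  show "AE x in lborel. norm (\<psi> x * eta (x - a)) \<le> norm (\<psi> x)"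
    using eta_le1 eta_nonneg by (auto simp: abs_mult intro!: mult_left_le)
qed

lemma no_const_mass:
  assumes nn: "\<forall>y. 0 \<le> \<psi> y" and int: "integrable lborel \<psi>" and w: "(\<integral>y. \<psi> y \<partial>lborel) = w" "w > 0"
    and zero: "\<forall>\<phi>. test_function \<phi> \<longrightarrow> (\<integral>y. \<psi> y * deriv \<phi> y \<partial>lborel) = 0"
  shows False
proof -
  have [measurable]: "\<psi> \<in> borel_measurable borel" using borel_measurable_integrable[OF int] by simp
  define H where "H a = (\<integral>y. \<psi> y * eta (y - a) \<partial>lborel)" for a
  have HH: "H a = H b" for a b
  proof -
    have "(\<integral>y. \<psi> y * deriv (phi a b) y \<partial>lborel) = 0" using zero test_phi by blast
    moreover have "(\<integral>y. \<psi> y * deriv (phi a b) y \<partial>lborel) = (\<integral>y. \<psi> y * eta (y - a) - \<psi> y * eta (y - b) \<partial>lborel)"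
      by (simp add: phi_deriv right_diff_distrib)
    moreover have "\<dots> = H a - H b" unfolding H_def
      by (intro Bochner_Integration.integral_diff psi_eta_int int)
    ultimately show ?thesis by simp
  qed
  have eH: "ennreal (H a) = (\<integral>\<^sup>+ y. ennreal (\<psi> y * eta (y - a)) \<partial>lborel)" for a
    unfolding H_def using nn eta_nonneg
    by (intro nn_integral_eq_integral[symmetric] psi_eta_int int) auto
  define I where "I = (\<integral>\<^sup>+ x. ennreal (eta x) \<partial>lborel)"
  have inner: "(\<integral>\<^sup>+ a. ennreal (\<psi> y * eta (y - a)) \<partial>lborel) = ennreal (\<psi> y) * I" for y
  proof -
    have "(\<integral>\<^sup>+ a. ennreal (\<psi> y * eta (y - a)) \<partial>lborel) = (\<integral>\<^sup>+ a. ennreal (\<psi> y) * ennreal (eta (y - a)) \<partial>lborel)"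
      using nn eta_nonneg by (intro nn_integral_cong) (simp add: ennreal_mult)
    also have "\<dots> = ennreal (\<psi> y) * (\<integral>\<^sup>+ a. ennreal (eta (y - a)) \<partial>lborel)"
      by (intro nn_integral_cmult) measurable
    also have "(\<integral>\<^sup>+ a. ennreal (eta (y - a)) \<partial>lborel) = I"
    proof -
      have "I = (\<integral>\<^sup>+ a. ennreal (eta (y + (-1) * a)) \<partial>lborel)"
        using nn_integral_real_affine[of "\<lambda>x. ennreal (eta x)" "-1" y] unfolding I_def by simp
      then show ?thesis by simp
    qed
    finally show ?thesis .
  qed
  have "(\<integral>\<^sup>+ (a::real). ennreal (H 0) \<partial>lborel) = (\<integral>\<^sup>+ a. (\<integral>\<^sup>+ y. ennreal (\<psi> y * eta (y - a)) \<partial>lborel) \<partial>lborel)"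
  proof (rule nn_integral_cong)
    fix a show "ennreal (H 0) = (\<integral>\<^sup>+ y. ennreal (\<psi> y * eta (y - a)) \<partial>lborel)"
      using HH[of 0 a] eH[of a] by simp
  qed
  also have "\<dots> = (\<integral>\<^sup>+ y. (\<integral>\<^sup>+ a. ennreal (\<psi> y * eta (y - a)) \<partial>lborel) \<partial>lborel)"
    by (intro lborel_pair.Fubini') measurable
  also have "\<dots> = (\<integral>\<^sup>+ y. ennreal (\<psi> y) * I \<partial>lborel)" by (simp add: inner)
  also have "\<dots> = (\<integral>\<^sup>+ y. ennreal (\<psi> y) \<partial>lborel) * I" by (intro nn_integral_multc) measurable
  also have "(\<integral>\<^sup>+ y. ennreal (\<psi> y) \<partial>lborel) = ennreal w"
    using nn w by (subst nn_integral_eq_integral) (auto intro: int)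
  finally have eq: "ennreal (H 0) * \<infinity> = ennreal w * I" by simp
  have Ipos: "0 < I" and Ifin: "I < \<infinity>" using eta_int_pos eta_int_fin unfolding I_def by auto
  have "0 < ennreal w * I" using w Ipos by (simp add: ennreal_zero_less_mult_iff)
  moreover have "ennreal w * I < \<infinity>" using Ifin by (simp add: ennreal_mult_less_top)
  ultimately show False using eq
    by (cases "H 0 > 0") (auto simp: ennreal_mult_top ennreal_neg)
qed


lemma amgm:
  fixes x y \<delta> :: real
  assumes "\<delta> > 0"
  shows "x * y \<le> (1/\<delta>) * (x\<^sup>2/2) + \<delta> * (y\<^sup>2/2)"
proof -
  have "(1/\<delta>) * (x\<^sup>2/2) + \<delta> * (y\<^sup>2/2) - x * y = (x - \<delta> * y)\<^sup>2 / (2 * \<delta>)"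
    using assms by (simp add: field_simps power2_eq_square)
  moreover have "0 \<le> (x - \<delta> * y)\<^sup>2 / (2 * \<delta>)" using assms by simp
  ultimately show ?thesis by linarith
qed

lemma E_split:
  fixes g \<psi> c :: "real \<Rightarrow> real"
  assumes cnn: "\<forall>x. 0 \<le> c x" and [measurable]: "c \<in> borel_measurable borel"
    "g \<in> borel_measurable borel" "\<psi> \<in> borel_measurable borel"
  shows "(\<integral>\<^sup>+y. ennreal ((g y)\<^sup>2/2 + c \<bar>\<psi> y\<bar>) \<partial>lborel)
       = (\<integral>\<^sup>+y. ennreal ((g y)\<^sup>2/2) \<partial>lborel) + (\<integral>\<^sup>+y. ennreal (c \<bar>\<psi> y\<bar>) \<partial>lborel)"
proof -
  have "(\<integral>\<^sup>+y. ennreal ((g y)\<^sup>2/2 + c \<bar>\<psi> y\<bar>) \<partial>lborel)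
      = (\<integral>\<^sup>+y. ennreal ((g y)\<^sup>2/2) + ennreal (c \<bar>\<psi> y\<bar>) \<partial>lborel)"
    using cnn by (intro nn_integral_cong) simp
  also have "\<dots> = (\<integral>\<^sup>+y. ennreal ((g y)\<^sup>2/2) \<partial>lborel) + (\<integral>\<^sup>+y. ennreal (c \<bar>\<psi> y\<bar>) \<partial>lborel)"
    by (intro nn_integral_add) measurable
  finally show ?thesis .
qed

lemma E_scale:
  fixes g \<psi> c :: "real \<Rightarrow> real"
  assumes cnn: "\<forall>x. 0 \<le> c x" and [measurable]: "c \<in> borel_measurable borel"
    "g \<in> borel_measurable borel" "\<psi> \<in> borel_measurable borel" and L: "L > 0"
  shows "(\<integral>\<^sup>+y. ennreal ((g (y/L) / L)\<^sup>2/2 + c \<bar>\<psi> (y/L)\<bar>) \<partial>lborel)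
       = ennreal L * (ennreal (1/L\<^sup>2) * (\<integral>\<^sup>+y. ennreal ((g y)\<^sup>2/2) \<partial>lborel) + (\<integral>\<^sup>+y. ennreal (c \<bar>\<psi> y\<bar>) \<partial>lborel))"
proof -
  let ?f = "\<lambda>y. ennreal ((g (y/L) / L)\<^sup>2/2 + c \<bar>\<psi> (y/L)\<bar>)"
  have fm: "?f \<in> borel_measurable borel" by measurable
  have "integral\<^sup>N lborel ?f = ennreal L * (\<integral>\<^sup>+x. ?f (0 + L * x) \<partial>lborel)"
    using nn_integral_real_affine[OF fm, of L 0] L by simp
  also have "(\<integral>\<^sup>+x. ?f (0 + L * x) \<partial>lborel) = (\<integral>\<^sup>+x. ennreal (1/L\<^sup>2) * ennreal ((g x)\<^sup>2/2) + ennreal (c \<bar>\<psi> x\<bar>) \<partial>lborel)"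
  proof (rule nn_integral_cong)
    fix x
    have "(g x / L)\<^sup>2/2 = (1/L\<^sup>2) * ((g x)\<^sup>2/2)" by (simp add: power_divide)
    then show "?f (0 + L * x) = ennreal (1/L\<^sup>2) * ennreal ((g x)\<^sup>2/2) + ennreal (c \<bar>\<psi> x\<bar>)"
      using L cnn by (simp add: ennreal_mult[symmetric])
  qed
  also have "\<dots> = (\<integral>\<^sup>+x. ennreal (1/L\<^sup>2) * ennreal ((g x)\<^sup>2/2) \<partial>lborel) + (\<integral>\<^sup>+y. ennreal (c \<bar>\<psi> y\<bar>) \<partial>lborel)"
    by (intro nn_integral_add) measurable
  also have "(\<integral>\<^sup>+x. ennreal (1/L\<^sup>2) * ennreal ((g x)\<^sup>2/2) \<partial>lborel) = ennreal (1/L\<^sup>2) * (\<integral>\<^sup>+y. ennreal ((g y)\<^sup>2/2) \<partial>lborel)"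
    by (intro nn_integral_cmult) measurable
  finally show ?thesis .
qed


lemma claimA:
  fixes \<psi> c :: "real \<Rightarrow> real"
  assumes cnn: "\<forall>x. 0 \<le> c x" and cm[measurable]: "c \<in> borel_measurable borel"
    and nn: "\<forall>y. 0 \<le> \<psi> y" and int: "integrable lborel \<psi>" and mass: "(\<integral>y. \<psi> y \<partial>lborel) = w"
    and en: "energy c \<psi> = ennreal (D * w)"
    and L1: "1 < L" and tauL: "tau c (L * w) = ennreal (D * (L * w))"
    and eps: "\<epsilon> > 0"
  shows "\<exists>g. weak_deriv \<psi> g \<and> (\<integral>\<^sup>+y. ennreal ((g y)\<^sup>2/2) \<partial>lborel) \<le> ennreal ((L\<^sup>2/(L\<^sup>2-1) + 1) * \<epsilon>)"
proof -
  have psim[measurable]: "\<psi> \<in> borel_measurable borel" using borel_measurable_integrable[OF int] by simp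
  have L: "L > 0" using L1 by simp
  define d where "d = max (D * w) 0"
  have dd: "ennreal (D * w) = ennreal d"
    by (cases "D * w \<ge> 0") (auto simp: d_def ennreal_neg)
  have "energy c \<psi> < ennreal (d + \<epsilon>)"
    unfolding en dd using eps by (subst ennreal_less_iff) (auto simp: d_def)
  then obtain g where wg: "weak_deriv \<psi> g"
    and Eg: "(\<integral>\<^sup>+ y. ennreal ((g y)\<^sup>2 / 2 + c \<bar>\<psi> y\<bar>) \<partial>lborel) < ennreal (d + \<epsilon>)"
    unfolding energy_def by (subst (asm) INF_less_iff) blast
  have gm[measurable]: "g \<in> borel_measurable borel"
    using wg locint_meas unfolding weak_deriv_def by blast
  define A where "A = (\<integral>\<^sup>+y. ennreal ((g y)\<^sup>2/2) \<partial>lborel)"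
  define B where "B = (\<integral>\<^sup>+y. ennreal (c \<bar>\<psi> y\<bar>) \<partial>lborel)"
  have AB: "A + B < ennreal (d + \<epsilon>)"
    using Eg E_split[OF cnn cm gm psim] unfolding A_def B_def by simp
  define \<psi>L where "\<psi>L = (\<lambda>y. \<psi> (y / L))"
  define gL where "gL = (\<lambda>y. g (y / L) / L)"
  have wgL: "weak_deriv \<psi>L gL" unfolding \<psi>L_def gL_def by (rule weak_deriv_scale[OF wg L])
  have intL: "integrable lborel \<psi>L"
    using lborel_integrable_real_affine[OF int, of "1/L" 0] L unfolding \<psi>L_def by simp
  have massL: "(\<integral>y. \<psi>L y \<partial>lborel) = L * w"
  proof -
    have "(\<integral>y. \<psi>L y \<partial>lborel) = \<bar>L\<bar> *\<^sub>R (\<integral>x. \<psi>L (0 + L * x) \<partial>lborel)"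
      using L by (intro lborel_integral_real_affine) simp
    then show ?thesis using L mass unfolding \<psi>L_def by simp
  qed
  have "tau c (L * w) \<le> energy c \<psi>L"
    unfolding tau_def using nn intL massL by (intro INF_lower) (auto simp: \<psi>L_def)
  also have "energy c \<psi>L \<le> (\<integral>\<^sup>+ y. ennreal ((gL y)\<^sup>2 / 2 + c \<bar>\<psi>L y\<bar>) \<partial>lborel)"
    unfolding energy_def using wgL by (intro INF_lower) simp
  also have "\<dots> = ennreal L * (ennreal (1/L\<^sup>2) * A + B)"
    unfolding gL_def \<psi>L_def A_def B_def by (rule E_scale[OF cnn cm gm psim L])
  finally have ineq: "ennreal (D * (L * w)) \<le> ennreal L * (ennreal (1/L\<^sup>2) * A + B)"
    using tauL by simp
  have ABt: "A + B < top" using order.strict_trans[OF AB ennreal_less_top] .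
  then have Afin: "A < top" and Bfin: "B < top" by auto
  obtain a where a: "0 \<le> a" "A = ennreal a" using Afin by (cases A) auto
  obtain b where b: "0 \<le> b" "B = ennreal b" using Bfin by (cases B) auto
  have r1: "D * (L * w) \<le> L * (1/L\<^sup>2 * a + b)"
  proof -
    have "ennreal L * (ennreal (1/L\<^sup>2) * A + B) = ennreal (L * (1/L\<^sup>2 * a + b))"
    proof -
      have "ennreal (1/L\<^sup>2) * ennreal a = ennreal (1/L\<^sup>2 * a)" using a ennreal_mult[of "1/L\<^sup>2" a] by simp
      moreover have "ennreal (1/L\<^sup>2 * a) + ennreal b = ennreal (1/L\<^sup>2 * a + b)" using a b by simp
      moreover have "ennreal L * ennreal (1/L\<^sup>2 * a + b) = ennreal (L * (1/L\<^sup>2 * a + b))"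
        using a b L ennreal_mult[of L "1/L\<^sup>2 * a + b"] by simp
      ultimately show ?thesis using a b by metis
    qed
    with ineq have "ennreal (D * (L * w)) \<le> ennreal (L * (1/L\<^sup>2 * a + b))" by simp
    then show ?thesis using a b L by (subst (asm) ennreal_le_iff) auto
  qed
  have r2: "a + b < d + \<epsilon>"
  proof -
    have "ennreal (a + b) < ennreal (d + \<epsilon>)" using AB a b by simp
    then show ?thesis using a b by (subst (asm) ennreal_less_iff) auto
  qed
  have "1 * 1 < L * L" using L1 by (intro mult_strict_mono) auto
  then have L2: "L\<^sup>2 - 1 > 0" by (simp add: power2_eq_square)
  have "a \<le> (L\<^sup>2/(L\<^sup>2-1) + 1) * \<epsilon>"
  proof (cases "D * w \<ge> 0")
    case True
    then have dv: "d = D * w" by (simp add: d_def)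
    have "L * b \<le> L * (D * w + \<epsilon> - a)" using r2 dv L by simp
    have e1: "L * (1/L\<^sup>2 * a + b) = a / L + L * b" using L by (simp add: field_simps power2_eq_square)
    have e2: "L * (D * w + \<epsilon> - a) = L * (D * w) + L * \<epsilon> - L * a" by (simp add: algebra_simps)
    have e3: "D * (L * w) = L * (D * w)" by simp
    have "L * a - a / L \<le> L * \<epsilon>"
      using r1 e1 e2 e3 \<open>L * b \<le> L * (D * w + \<epsilon> - a)\<close> by linarith
    then have "L * (L * a - a / L) \<le> L * (L * \<epsilon>)" using L by simp
    then have "a * (L\<^sup>2 - 1) \<le> L\<^sup>2 * \<epsilon>" using L by (simp add: algebra_simps power2_eq_square)
    then have "a \<le> L\<^sup>2 * \<epsilon> / (L\<^sup>2 - 1)" using L2 by (simp add: field_simps)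
    also have "\<dots> \<le> (L\<^sup>2/(L\<^sup>2-1) + 1) * \<epsilon>" using eps by (simp add: algebra_simps)
    finally show ?thesis .
  next
    case False
    then have "d = 0" by (simp add: d_def)
    then have "a \<le> \<epsilon>" using r2 b by simp
    also have "\<epsilon> \<le> (L\<^sup>2/(L\<^sup>2-1) + 1) * \<epsilon>" using eps L2 by (simp add: algebra_simps)
    finally show ?thesis .
  qed
  then have "A \<le> ennreal ((L\<^sup>2/(L\<^sup>2-1) + 1) * \<epsilon>)" using a by simp
  then show ?thesis using wg unfolding A_def by blast
qed


lemma bound_h:
  fixes g \<phi> h :: "real \<Rightarrow> real"
  assumes d: "\<delta> > 0" and [measurable]: "g \<in> borel_measurable borel" "\<phi> \<in> borel_measurable borel"
    and hb: "\<forall>y. h y \<le> (1/\<delta>) * ((g y)\<^sup>2/2) + \<delta> * ((\<phi> y)\<^sup>2/2)"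
    and A: "(\<integral>\<^sup>+y. ennreal ((g y)\<^sup>2/2) \<partial>lborel) \<le> ennreal \<alpha>" "0 \<le> \<alpha>"
    and P: "(\<integral>\<^sup>+y. ennreal ((\<phi> y)\<^sup>2/2) \<partial>lborel) = ennreal p" "0 \<le> p"
  shows "(\<integral>y. h y \<partial>lborel) \<le> \<alpha> / \<delta> + \<delta> * p"
proof (rule integral_real_bounded)
  show "0 \<le> \<alpha> / \<delta> + \<delta> * p" using d A P by simp
  have "(\<integral>\<^sup>+y. ennreal (h y) \<partial>lborel) \<le> (\<integral>\<^sup>+y. ennreal (1/\<delta>) * ennreal ((g y)\<^sup>2/2) + ennreal \<delta> * ennreal ((\<phi> y)\<^sup>2/2) \<partial>lborel)"
  proof (rule nn_integral_mono)
    fix y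
    have "ennreal (h y) \<le> ennreal ((1/\<delta>) * ((g y)\<^sup>2/2) + \<delta> * ((\<phi> y)\<^sup>2/2))"
      using hb by (intro ennreal_leI) auto
    also have "\<dots> = ennreal (1/\<delta>) * ennreal ((g y)\<^sup>2/2) + ennreal \<delta> * ennreal ((\<phi> y)\<^sup>2/2)"
    proof -
      have n1: "0 \<le> 1/\<delta>" "0 \<le> (g y)\<^sup>2/2" "0 \<le> \<delta>" "0 \<le> (\<phi> y)\<^sup>2/2"
        "0 \<le> 1/\<delta> * ((g y)\<^sup>2/2)" "0 \<le> \<delta> * ((\<phi> y)\<^sup>2/2)" using d by auto
      show ?thesis
        by (simp only: ennreal_plus[OF n1(5) n1(6)] ennreal_mult[OF n1(1) n1(2)] ennreal_mult[OF n1(3) n1(4)])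
    qed
    finally show "ennreal (h y) \<le> ennreal (1/\<delta>) * ennreal ((g y)\<^sup>2/2) + ennreal \<delta> * ennreal ((\<phi> y)\<^sup>2/2)" .
  qed
  also have "\<dots> = ennreal (1/\<delta>) * (\<integral>\<^sup>+y. ennreal ((g y)\<^sup>2/2) \<partial>lborel) + ennreal \<delta> * (\<integral>\<^sup>+y. ennreal ((\<phi> y)\<^sup>2/2) \<partial>lborel)"
    by (subst nn_integral_add) (auto simp: nn_integral_cmult)
  also have "\<dots> \<le> ennreal (1/\<delta>) * ennreal \<alpha> + ennreal \<delta> * ennreal p"
    using A P by (intro add_mono mult_left_mono) auto
  also have "\<dots> = ennreal (\<alpha> / \<delta> + \<delta> * p)"
    using d A P by (simp add: ennreal_mult[symmetric] ennreal_plus)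
  finally show "(\<integral>\<^sup>+y. ennreal (h y) \<partial>lborel) \<le> ennreal (\<alpha> / \<delta> + \<delta> * p)" .
qed

lemma claimB:
  fixes \<psi> \<phi> :: "real \<Rightarrow> real" and K :: real
  assumes Kpos: "K > 0"
    and small: "\<And>\<epsilon>. \<epsilon> > 0 \<Longrightarrow> \<exists>g. weak_deriv \<psi> g \<and> (\<integral>\<^sup>+y. ennreal ((g y)\<^sup>2/2) \<partial>lborel) \<le> ennreal (K * \<epsilon>)"
    and tf: "test_function \<phi>"
  shows "(\<integral>y. \<psi> y * deriv \<phi> y \<partial>lborel) = 0"
proof (rule ccontr)
  define X where "X = (\<integral>y. \<psi> y * deriv \<phi> y \<partial>lborel)"
  assume "X \<noteq> 0"
  then have Xpos: "\<bar>X\<bar> > 0" by simp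
  have diff: "\<phi> differentiable (at x)" for x
    using tf unfolding test_function_def by (metis funpow_0)
  have cont: "continuous_on UNIV \<phi>"
    using diff by (intro continuous_at_imp_continuous_on) (auto intro: differentiable_imp_continuous_within)
  have \<phi>m[measurable]: "\<phi> \<in> borel_measurable borel" by (rule borel_measurable_continuous_onI[OF cont])
  obtain R where R: "\<forall>x. R < \<bar>x\<bar> \<longrightarrow> \<phi> x = 0" using tf unfolding test_function_def by blast
  have "compact (\<phi> ` {-\<bar>R\<bar>..\<bar>R\<bar>})"
    by (intro compact_continuous_image continuous_on_subset[OF cont]) auto
  then obtain M where M: "\<forall>u\<in>\<phi> ` {-\<bar>R\<bar>..\<bar>R\<bar>}. norm u \<le> M"
    using compact_imp_bounded bounded_iff by metis
  have Mall: "(\<phi> x)\<^sup>2 \<le> M\<^sup>2 * indicator {-\<bar>R\<bar>..\<bar>R\<bar>} x" for x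
  proof (cases "x \<in> {-\<bar>R\<bar>..\<bar>R\<bar>}")
    case True
    then have "\<bar>\<phi> x\<bar> \<le> M" using M by auto
    then have "\<bar>\<phi> x\<bar> \<le> \<bar>M\<bar>" by simp
    then show ?thesis using True by (simp add: abs_le_square_iff)
  next
    case False
    then have "R < \<bar>x\<bar>" by auto
    then show ?thesis using R False by simp
  qed
  define P where "P = (\<integral>\<^sup>+y. ennreal ((\<phi> y)\<^sup>2/2) \<partial>lborel)"
  have "P \<le> (\<integral>\<^sup>+y. ennreal (M\<^sup>2/2) * indicator {-\<bar>R\<bar>..\<bar>R\<bar>} y \<partial>lborel)"
    unfolding P_def
  proof (rule nn_integral_mono)
    fix y
    show "ennreal ((\<phi> y)\<^sup>2/2) \<le> ennreal (M\<^sup>2/2) * indicator {-\<bar>R\<bar>..\<bar>R\<bar>} y"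
    proof (cases "y \<in> {-\<bar>R\<bar>..\<bar>R\<bar>}")
      case True
      then have "(\<phi> y)\<^sup>2 \<le> M\<^sup>2" using Mall[of y] by simp
      then show ?thesis using True by (simp add: ennreal_leI)
    next
      case False
      then have "(\<phi> y)\<^sup>2 \<le> 0" using Mall[of y] by simp
      then have "\<phi> y = 0" by simp
      then show ?thesis by simp
    qed
  qed
  also have "\<dots> = ennreal (M\<^sup>2/2) * emeasure lborel {-\<bar>R\<bar>..\<bar>R\<bar>}"
    by (rule nn_integral_cmult_indicator) simp
  also have "\<dots> < \<infinity>" by (simp add: ennreal_mult_less_top)
  finally have Pfin: "P < \<infinity>" .
  obtain p where p: "0 \<le> p" "P = ennreal p" using Pfin by (cases P) auto
  define \<delta> where "\<delta> = \<bar>X\<bar> / (2 * (p + 1))"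
  have dpos: "\<delta> > 0" using Xpos p by (simp add: \<delta>_def)
  define \<epsilon> where "\<epsilon> = \<bar>X\<bar> * \<delta> / (2 * K)"
  have epos: "\<epsilon> > 0" using Xpos dpos Kpos by (simp add: \<epsilon>_def)
  obtain g where wg: "weak_deriv \<psi> g" and gA: "(\<integral>\<^sup>+y. ennreal ((g y)\<^sup>2/2) \<partial>lborel) \<le> ennreal (K * \<epsilon>)"
    using small[OF epos] by blast
  have gm[measurable]: "g \<in> borel_measurable borel"
    using wg locint_meas unfolding weak_deriv_def by blast
  have KE: "0 \<le> K * \<epsilon>" using Kpos epos by simp
  have XX: "X = - (\<integral>y. g y * \<phi> y \<partial>lborel)"
    using wg tf unfolding weak_deriv_def X_def by blast
  have b1: "(\<integral>y. g y * \<phi> y \<partial>lborel) \<le> K * \<epsilon> / \<delta> + \<delta> * p"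
    by (rule bound_h[OF dpos gm \<phi>m _ gA KE p(2)[unfolded P_def] p(1)]) (use amgm dpos in blast)
  have b2: "(\<integral>y. - (g y * \<phi> y) \<partial>lborel) \<le> K * \<epsilon> / \<delta> + \<delta> * p"
  proof (rule bound_h[OF dpos gm \<phi>m _ gA KE p(2)[unfolded P_def] p(1)])
    show "\<forall>y. - (g y * \<phi> y) \<le> 1 / \<delta> * ((g y)\<^sup>2 / 2) + \<delta> * ((\<phi> y)\<^sup>2 / 2)"
      using amgm[OF dpos, of "g _" "- \<phi> _"] by simp
  qed
  have "\<bar>X\<bar> \<le> K * \<epsilon> / \<delta> + \<delta> * p"
    using b1 b2 XX by (simp add: Bochner_Integration.integral_minus abs_le_iff)
  also have "K * \<epsilon> / \<delta> = \<bar>X\<bar> / 2" using Kpos dpos by (simp add: \<epsilon>_def field_simps)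
  also have "\<delta> * p < \<bar>X\<bar> / 2"
  proof -
    have "\<delta> * p = \<bar>X\<bar> / 2 * (p / (p + 1))" using p by (simp add: \<delta>_def field_simps)
    also have "\<dots> < \<bar>X\<bar> / 2 * 1" using Xpos p by (intro mult_strict_left_mono) auto
    finally show ?thesis by simp
  qed
  finally show False by simp
qed


theorem mainTheorem10:
  fixes z :: "real \<Rightarrow> real" and W D :: real
  assumes z_nonneg: "\<forall>\<phi>>0. 0 \<le> z \<phi>"
    and z_mono: "antimono_on {0<..} z"
    and z_lsc: "lsc_on {0<..} z"
    and sqrt_int: "(\<integral>\<^sup>+ \<phi>\<in>{0..1}. ennreal (sqrt (c_of z \<phi>)) \<partial>lborel) < \<infinity>"
    and W_pos: "W > 0"
    and deriv0: "((\<lambda>w. enn2real (tau (c_of z) w)) has_real_derivative D) (at_right 0)"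
    and linear: "\<forall>w\<in>{0..W}. tau (c_of z) w = ennreal (D * w)"
  shows "\<forall>w\<in>{0<..<W}. \<not> (\<exists>\<psi>. (\<forall>y. 0 \<le> \<psi> y) \<and> integrable lborel \<psi> \<and>
            (\<integral>y. \<psi> y \<partial>lborel) = w \<and> energy (c_of z) \<psi> = tau (c_of z) w)"
proof (intro ballI notI)
  fix w assume w: "w \<in> {0<..<W}"
  assume "\<exists>\<psi>. (\<forall>y. 0 \<le> \<psi> y) \<and> integrable lborel \<psi> \<and>
            (\<integral>y. \<psi> y \<partial>lborel) = w \<and> energy (c_of z) \<psi> = tau (c_of z) w"
  then obtain \<psi> where nn: "\<forall>y. 0 \<le> \<psi> y" and int: "integrable lborel \<psi>"
    and mass: "(\<integral>y. \<psi> y \<partial>lborel) = w" and eq: "energy (c_of z) \<psi> = tau (c_of z) w"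
    by blast
  have wpos: "0 < w" "w < W" using w by auto
  have cnn: "\<forall>x. 0 \<le> c_of z x" using z_nonneg by (auto simp: c_of_def)
  have cm: "c_of z \<in> borel_measurable borel" by (rule c_meas[OF z_mono])
  have en: "energy (c_of z) \<psi> = ennreal (D * w)" using eq linear wpos by auto
  define L where "L = min 2 (W / w)"
  have "1 < W / w" using wpos by simp
  then have L1: "1 < L" by (simp add: L_def)
  have "L \<le> W / w" by (simp add: L_def)
  then have LW: "L * w \<le> W" using wpos by (simp add: field_simps)
  have tauL: "tau (c_of z) (L * w) = ennreal (D * (L * w))"
    using linear LW L1 wpos by auto
  define K where "K = L\<^sup>2/(L\<^sup>2-1) + 1"
  have "1 * 1 < L * L" using L1 by (intro mult_strict_mono) auto
  then have L2: "L\<^sup>2 - 1 > 0" by (simp add: power2_eq_square)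
  then have "0 \<le> L\<^sup>2/(L\<^sup>2-1)" by simp
  then have Kpos: "K > 0" unfolding K_def by linarith
  have small: "\<exists>g. weak_deriv \<psi> g \<and> (\<integral>\<^sup>+y. ennreal ((g y)\<^sup>2/2) \<partial>lborel) \<le> ennreal (K * \<epsilon>)"
    if "\<epsilon> > 0" for \<epsilon>
    using claimA[OF cnn cm nn int mass en L1 tauL that] unfolding K_def by blast
  have "\<forall>\<phi>. test_function \<phi> \<longrightarrow> (\<integral>y. \<psi> y * deriv \<phi> y \<partial>lborel) = 0"
    using claimB[OF Kpos small] by blast
  then show False using no_const_mass[OF nn int mass wpos(1)] by blast
qed


end
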